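(* Let $K^n$ ($n\ge3$) be a finite $n$-dimensional pseudomanifold with a reflection $\vartheta$ and associated subcomplexes $K_+,K_-,K_0$, and let $\kappa>0$. If $\underline{w}_\pm\in\mathfrak{C}_\kappa(K_\pm)$ with $\pi_0\underline{w}_+=\pi_0\underline{w}_-$, then the assignment $\underline{w}$ on the edges of $K^n$ that agrees with $\underline{w}_+$ on edges of $K_+$ and with $\underline{w}_-$ on edges of $K_-$ lies in $\mathfrak{C}_\kappa(K^n)$. Moreover $\pi_0$ maps $\mathfrak{C}_\kappa(K^n)$ into $\mathfrak{C}_\kappa(K_0)$.
   Context: A finite simplicial complex is a finite vertex set with a family of nonempty subsets (simplexes) containing singletons and closed under nonempty subsets. An $n$-dimensional pseudomanifold: every simplex is a face of an $n$-simplex, every $(n-1)$-simplex is a face of at most two $n$-simplexes, any two $n$-simplexes are joined by a chain of $n$-simplexes with consecutive ones sharing an $(n-1)$-simplex. For a simplex $\sigma$ with vertices $0,\dots,k$ and edge values $z_{ij}>0$ ($z_{ii}=0$), $A(\underline{z}(\sigma))$ is the $k\times k$ matrix $a_{ij}=\tfrac12(z_{0i}+z_{0j}-z_{ij})$. A reflection is an involutive simplicial automorphism $\vartheta\neq\mathrm{id}$ of $K^n$ with subcomplexes $K_\pm$ that are $n$-dimensional pseudomanifolds, $K_-=\vartheta K_+$, $K_0=K_+\cap K_-$ a nonempty $(n-1)$-dimensional pseudomanifold on which $\vartheta$ is the identity, and every simplex of $K^n$ lies in $K_+$ or $K_-$. $\pi_\pm,\pi_0$ denote restriction of an edge assignment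 to the edges of $K_\pm$, $K_0$; $\underline{z}_\pm=\pi_\pm\underline{z}$; $\|\cdot\|$ is the Euclidean norm. The cut-off set for $K^n$ is $\mathfrak{C}_\kappa(K^n)=\{\underline{z}:\det A(\underline{z}(\sigma))\ge1/\kappa\text{ for all }\sigma\in K^n\text{ with }1\le\dim\sigma\le n,\ \max(\|\underline{z}_+\|,\|\underline{z}_-\|)\le\kappa\}$; for $L\in\{K_+,K_-,K_0\}$ of dimension $m$, $\mathfrak{C}_\kappa(L)=\{\underline{w}:\det A(\underline{w}(\sigma))\ge1/\kappa\text{ for all }\sigma\in L,\ 1\le\dim\sigma\le m,\ \|\underline{w}\|\le\kappa\}$. *)

theory Defs
  imports "HOL-Analysis.Analysis"
begin

text \<open>A finite simplicial complex is represented by its family of simplexes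
  K :: 'a set set; the vertex set is the union of K.\<close>

definition simplicial_complex :: "'a set set \<Rightarrow> bool" where
  "simplicial_complex K \<longleftrightarrow> finite K \<and>
     (\<forall>\<sigma>\<in>K. finite \<sigma> \<and> \<sigma> \<noteq> {}) \<and>
     (\<forall>\<sigma>\<in>K. \<forall>\<tau>. \<tau> \<subseteq> \<sigma> \<and> \<tau> \<noteq> {} \<longrightarrow> \<tau> \<in> K)"

definition sdim :: "'a set \<Rightarrow> nat" where
  "sdim \<sigma> = card \<sigma> - 1"

definition adjacent_top :: "nat \<Rightarrow> 'a set set \<Rightarrow> 'a set \<Rightarrow> 'a set \<Rightarrow> bool" where
  "adjacent_top n K \<tau> \<tau>' \<longleftrightarrow> \<tau> \<in> K \<and> \<tau>' \<in> K \<and> sdim \<tau> = n \<and> sdim \<tau>' = n \<and>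
     (\<exists>\<sigma>\<in>K. sdim \<sigma> = n - 1 \<and> \<sigma> \<subseteq> \<tau> \<and> \<sigma> \<subseteq> \<tau>')"

definition pseudomanifold :: "nat \<Rightarrow> 'a set set \<Rightarrow> bool" where
  "pseudomanifold n K \<longleftrightarrow> simplicial_complex K \<and> K \<noteq> {} \<and>
     (\<forall>\<sigma>\<in>K. \<exists>\<tau>\<in>K. sdim \<tau> = n \<and> \<sigma> \<subseteq> \<tau>) \<and>
     (\<forall>\<sigma>\<in>K. sdim \<sigma> = n - 1 \<longrightarrow> card {\<tau>\<in>K. sdim \<tau> = n \<and> \<sigma> \<subseteq> \<tau>} \<le> 2) \<and>
     (\<forall>\<tau>\<in>K. \<forall>\<tau>'\<in>K. sdim \<tau> = n \<and> sdim \<tau>' = n \<longrightarrow> (adjacent_top n K)\<^sup>*\<^sup>* \<tau> \<tau>')"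

definition simplicial_automorphism :: "'a set set \<Rightarrow> ('a \<Rightarrow> 'a) \<Rightarrow> bool" where
  "simplicial_automorphism K f \<longleftrightarrow> bij_betw f (\<Union>K) (\<Union>K) \<and>
     (\<forall>\<sigma>. \<sigma> \<subseteq> \<Union>K \<longrightarrow> (\<sigma> \<in> K \<longleftrightarrow> f ` \<sigma> \<in> K))"

definition reflection ::
  "nat \<Rightarrow> 'a set set \<Rightarrow> ('a \<Rightarrow> 'a) \<Rightarrow> 'a set set \<Rightarrow> 'a set set \<Rightarrow> 'a set set \<Rightarrow> bool" where
  "reflection n K \<theta> Kp Km K0 \<longleftrightarrow>
     simplicial_automorphism K \<theta> \<and>
     (\<forall>v\<in>\<Union>K. \<theta> (\<theta> v) = v) \<and> (\<exists>v\<in>\<Union>K. \<theta> v \<noteq> v) \<and>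
     Kp \<subseteq> K \<and> Km \<subseteq> K \<and>
     pseudomanifold n Kp \<and> pseudomanifold n Km \<and>
     Km = (\<lambda>\<sigma>. \<theta> ` \<sigma>) ` Kp \<and>
     K0 = Kp \<inter> Km \<and> K0 \<noteq> {} \<and> pseudomanifold (n - 1) K0 \<and>
     (\<forall>v\<in>\<Union>K0. \<theta> v = v) \<and>
     K = Kp \<union> Km"

definition edges :: "'a set set \<Rightarrow> 'a set set" where
  "edges L = {e\<in>L. card e = 2}"

text \<open>Edge assignments on L: functions on 2-element sets, positive on the edges of L
  and zero elsewhere (so an assignment is a vector indexed by edges L).\<close>
definition assignment :: "'a set set \<Rightarrow> ('a set \<Rightarrow> real) \<Rightarrow> bool" where
  "assignment L z \<longleftrightarrow> (\<forall>e\<in>edges L. z e > 0) \<and> (\<forall>e. e \<notin> edges L \<longrightarrow> z e = 0)"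

definition restr :: "'a set set \<Rightarrow> ('a set \<Rightarrow> real) \<Rightarrow> ('a set \<Rightarrow> real)" where
  "restr L z = (\<lambda>e. if e \<in> edges L then z e else 0)"

definition enorm :: "'a set set \<Rightarrow> ('a set \<Rightarrow> real) \<Rightarrow> real" where
  "enorm L z = sqrt (\<Sum>e\<in>edges L. (z e)\<^sup>2)"

definition zval :: "('a set \<Rightarrow> real) \<Rightarrow> 'a \<Rightarrow> 'a \<Rightarrow> real" where
  "zval z i j = (if i = j then 0 else z {i, j})"

definition det_on :: "'a set \<Rightarrow> ('a \<Rightarrow> 'a \<Rightarrow> real) \<Rightarrow> real" where
  "det_on S a = (\<Sum>p\<in>{p. p permutes S}. of_int (sign p) * (\<Prod>i\<in>S. a i (p i)))"

text \<open>det A(z(\<sigma>)): vertices of \<sigma> labelled in increasing order, vertex 0 = Min \<sigma>.\<close>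
definition detA :: "('a::linorder set \<Rightarrow> real) \<Rightarrow> 'a set \<Rightarrow> real" where
  "detA z \<sigma> = (let v0 = Min \<sigma> in
     det_on (\<sigma> - {v0}) (\<lambda>i j. (zval z v0 i + zval z v0 j - zval z i j) / 2))"

definition cutoff :: "real \<Rightarrow> nat \<Rightarrow> 'a::linorder set set \<Rightarrow> ('a set \<Rightarrow> real) set" where
  "cutoff \<kappa> m L = {w. assignment L w \<and>
      (\<forall>\<sigma>\<in>L. 1 \<le> sdim \<sigma> \<and> sdim \<sigma> \<le> m \<longrightarrow> detA w \<sigma> \<ge> 1 / \<kappa>) \<and> enorm L w \<le> \<kappa>}"

definition cutoffK :: "real \<Rightarrow> nat \<Rightarrow> 'a::linorder set set \<Rightarrow> 'a set set \<Rightarrow> 'a set set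
    \<Rightarrow> ('a set \<Rightarrow> real) set" where
  "cutoffK \<kappa> n K Kp Km = {z. assignment K z \<and>
      (\<forall>\<sigma>\<in>K. 1 \<le> sdim \<sigma> \<and> sdim \<sigma> \<le> n \<longrightarrow> detA z \<sigma> \<ge> 1 / \<kappa>) \<and>
      max (enorm Kp z) (enorm Km z) \<le> \<kappa>}"

definition glue :: "'a set set \<Rightarrow> 'a set set \<Rightarrow> ('a set \<Rightarrow> real) \<Rightarrow> ('a set \<Rightarrow> real)
    \<Rightarrow> ('a set \<Rightarrow> real)" where
  "glue Kp Km wp wm = (\<lambda>e. if e \<in> edges Kp then wp e else if e \<in> edges Km then wm e else 0)"

end

theory Submission
  imports Defs
begin

lemma detA_cong:
  assumes "finite \<sigma>" "\<sigma> \<noteq> {}"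
    and "\<forall>a\<in>\<sigma>. \<forall>b\<in>\<sigma>. a \<noteq> b \<longrightarrow> z {a,b} = z' {a,b}"
  shows "detA z \<sigma> = detA z' \<sigma>"
proof -
  have zv: "\<And>a b. a \<in> \<sigma> \<Longrightarrow> b \<in> \<sigma> \<Longrightarrow> zval z a b = zval z' a b"
    using assms(3) by (simp add: zval_def)
  have m: "Min \<sigma> \<in> \<sigma>" using assms(1,2) by simp
  show ?thesis
    unfolding detA_def Let_def det_on_def
  proof (rule sum.cong[OF refl])
    fix p assume "p \<in> {p. p permutes \<sigma> - {Min \<sigma>}}"
    then have p: "p permutes \<sigma> - {Min \<sigma>}" by simp
    show "of_int (sign p) * (\<Prod>i\<in>\<sigma> - {Min \<sigma>}. (zval z (Min \<sigma>) i + zval z (Min \<sigma>) (p i) - zval z i (p i)) / 2)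
        = of_int (sign p) * (\<Prod>i\<in>\<sigma> - {Min \<sigma>}. (zval z' (Min \<sigma>) i + zval z' (Min \<sigma>) (p i) - zval z' i (p i)) / 2)"
    proof (rule arg_cong[where f="\<lambda>x. of_int (sign p) * x"], rule prod.cong[OF refl])
      fix i assume i: "i \<in> \<sigma> - {Min \<sigma>}"
      then have "p i \<in> \<sigma> - {Min \<sigma>}" using p i by (simp only: permutes_in_image)
      then show "(zval z (Min \<sigma>) i + zval z (Min \<sigma>) (p i) - zval z i (p i)) / 2
          = (zval z' (Min \<sigma>) i + zval z' (Min \<sigma>) (p i) - zval z' i (p i)) / 2"
        using i m zv by auto
    qed
  qed
qed

lemma edge_in:
  assumes "simplicial_complex L" "\<sigma> \<in> L" "a \<in> \<sigma>" "b \<in> \<sigma>" "a \<noteq> b"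
  shows "{a,b} \<in> edges L"
proof -
  have cl: "\<forall>\<sigma>\<in>L. \<forall>\<tau>. \<tau> \<subseteq> \<sigma> \<and> \<tau> \<noteq> {} \<longrightarrow> \<tau> \<in> L"
    using assms(1) unfolding simplicial_complex_def by (elim conjE)
  have "{a,b} \<subseteq> \<sigma>" using assms(3,4) by simp
  then have "{a,b} \<in> L" using cl assms(2) by simp
  then show ?thesis using assms(5) by (simp add: edges_def)
qed

lemma sc_fin: "simplicial_complex L \<Longrightarrow> \<sigma> \<in> L \<Longrightarrow> finite \<sigma> \<and> \<sigma> \<noteq> {}"
  unfolding simplicial_complex_def by (elim conjE) simp

lemma edges_fin: "simplicial_complex L \<Longrightarrow> finite (edges L)"
  unfolding simplicial_complex_def edges_def by (elim conjE) simp

theorem lemmaA2: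
  fixes K Kp Km K0 :: "'a::linorder set set" and \<theta> :: "'a \<Rightarrow> 'a"
    and n :: nat and \<kappa> :: real and wp wm :: "'a set \<Rightarrow> real"
  assumes "n \<ge> 3"
    and "pseudomanifold n K"
    and "reflection n K \<theta> Kp Km K0"
    and "\<kappa> > 0"
    and "wp \<in> cutoff \<kappa> n Kp" and "wm \<in> cutoff \<kappa> n Km"
    and "restr K0 wp = restr K0 wm"
  shows "glue Kp Km wp wm \<in> cutoffK \<kappa> n K Kp Km \<and>
         restr K0 ` cutoffK \<kappa> n K Kp Km \<subseteq> cutoff \<kappa> (n - 1) K0"
proof
  have RR: "Kp \<subseteq> K \<and> Km \<subseteq> K \<and> K0 = Kp \<inter> Km \<and> K = Kp \<union> Km \<and>
    pseudomanifold n Kp \<and> pseudomanifold n Km \<and> pseudomanifold (n - 1) K0"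
    using assms(3) unfolding reflection_def by (elim conjE) (intro conjI; assumption)
  then have R: "Kp \<subseteq> K" "Km \<subseteq> K" "K0 = Kp \<inter> Km" "K = Kp \<union> Km"
    "pseudomanifold n Kp" "pseudomanifold n Km" "pseudomanifold (n - 1) K0" by blast+
  have scp: "simplicial_complex Kp" using R(5) unfolding pseudomanifold_def by (elim conjE)
  have scm: "simplicial_complex Km" using R(6) unfolding pseudomanifold_def by (elim conjE)
  have e0: "edges K0 = edges Kp \<inter> edges Km" using R(3) by (auto simp: edges_def)
  have ek: "edges K = edges Kp \<union> edges Km" using R(4) by (auto simp: edges_def)
  have agree: "\<And>e. e \<in> edges Kp \<Longrightarrow> e \<in> edges Km \<Longrightarrow> wp e = wm e"
  proof -
    fix e assume "e \<in> edges Kp" "e \<in> edges Km"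
    then have "e \<in> edges K0" using e0 by simp
    then show "wp e = wm e" using fun_cong[OF assms(7), of e] by (simp add: restr_def)
  qed
  define g where "g = glue Kp Km wp wm"
  have gp: "\<And>e. e \<in> edges Kp \<Longrightarrow> g e = wp e" by (simp add: g_def glue_def)
  have gm: "\<And>e. e \<in> edges Km \<Longrightarrow> g e = wm e" using agree by (simp add: g_def glue_def)
  have wpc: "assignment Kp wp" "\<forall>\<sigma>\<in>Kp. 1 \<le> sdim \<sigma> \<and> sdim \<sigma> \<le> n \<longrightarrow> detA wp \<sigma> \<ge> 1 / \<kappa>"
    "enorm Kp wp \<le> \<kappa>" using assms(5) by (auto simp: cutoff_def)
  have wmc: "assignment Km wm" "\<forall>\<sigma>\<in>Km. 1 \<le> sdim \<sigma> \<and> sdim \<sigma> \<le> n \<longrightarrow> detA wm \<sigma> \<ge> 1 / \<kappa>"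
    "enorm Km wm \<le> \<kappa>" using assms(6) by (auto simp: cutoff_def)
  have asg: "assignment K g"
    unfolding assignment_def
  proof (intro conjI allI impI ballI)
    fix e assume "e \<in> edges K"
    then show "g e > 0" using ek gp gm wpc(1) wmc(1) unfolding assignment_def by auto
  next
    fix e assume "e \<notin> edges K"
    then show "g e = 0" using ek by (simp add: g_def glue_def)
  qed
  have det: "\<forall>\<sigma>\<in>K. 1 \<le> sdim \<sigma> \<and> sdim \<sigma> \<le> n \<longrightarrow> detA g \<sigma> \<ge> 1 / \<kappa>"
  proof (intro ballI impI)
    fix \<sigma> assume s: "\<sigma> \<in> K" and d: "1 \<le> sdim \<sigma> \<and> sdim \<sigma> \<le> n"
    show "detA g \<sigma> \<ge> 1 / \<kappa>"
    proof (cases "\<sigma> \<in> Kp")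
      case True
      have "detA g \<sigma> = detA wp \<sigma>"
        using sc_fin[OF scp True] edge_in[OF scp True] gp by (intro detA_cong) auto
      then show ?thesis using wpc(2) True d by simp
    next
      case False
      then have F: "\<sigma> \<in> Km" using s R(4) by auto
      have "detA g \<sigma> = detA wm \<sigma>"
        using sc_fin[OF scm F] edge_in[OF scm F] gm by (intro detA_cong) auto
      then show ?thesis using wmc(2) F d by simp
    qed
  qed
  have np: "enorm Kp g = enorm Kp wp" unfolding enorm_def using gp by simp
  have nm: "enorm Km g = enorm Km wm" unfolding enorm_def using gm by simp
  show "glue Kp Km wp wm \<in> cutoffK \<kappa> n K Kp Km"
    using asg det np nm wpc(3) wmc(3) unfolding g_def[symmetric] cutoffK_def by simp
  show "restr K0 ` cutoffK \<kappa> n K Kp Km \<subseteq> cutoff \<kappa> (n - 1) K0"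
  proof
    fix w assume "w \<in> restr K0 ` cutoffK \<kappa> n K Kp Km"
    then obtain z where z: "z \<in> cutoffK \<kappa> n K Kp Km" and w: "w = restr K0 z" by blast
    have zc: "assignment K z" "\<forall>\<sigma>\<in>K. 1 \<le> sdim \<sigma> \<and> sdim \<sigma> \<le> n \<longrightarrow> detA z \<sigma> \<ge> 1 / \<kappa>"
      "enorm Kp z \<le> \<kappa>" using z by (auto simp: cutoffK_def)
    have sc0: "simplicial_complex K0"
      using R(7) unfolding pseudomanifold_def by (elim conjE)
    have a0: "assignment K0 w"
      using zc(1) ek e0 unfolding assignment_def w restr_def by auto
    have d0: "\<forall>\<sigma>\<in>K0. 1 \<le> sdim \<sigma> \<and> sdim \<sigma> \<le> n - 1 \<longrightarrow> detA w \<sigma> \<ge> 1 / \<kappa>"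
    proof (intro ballI impI)
      fix \<sigma> assume s: "\<sigma> \<in> K0" and d: "1 \<le> sdim \<sigma> \<and> sdim \<sigma> \<le> n - 1"
      have "detA w \<sigma> = detA z \<sigma>"
        using sc_fin[OF sc0 s] edge_in[OF sc0 s] unfolding w restr_def
        by (intro detA_cong) auto
      moreover have "\<sigma> \<in> K" using s R by auto
      ultimately show "detA w \<sigma> \<ge> 1 / \<kappa>" using zc(2) d by auto
    qed
    have "(\<Sum>e\<in>edges K0. (w e)\<^sup>2) = (\<Sum>e\<in>edges K0. (z e)\<^sup>2)"
      unfolding w restr_def by simp
    also have "\<dots> \<le> (\<Sum>e\<in>edges Kp. (z e)\<^sup>2)"
      using e0 edges_fin[OF scp] by (intro sum_mono2) auto
    finally have "enorm K0 w \<le> enorm Kp z" unfolding enorm_def by simp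
    then have "enorm K0 w \<le> \<kappa>" using zc(3) by simp
    then show "w \<in> cutoff \<kappa> (n - 1) K0" using a0 d0 by (simp add: cutoff_def)
  qed
qed

end
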